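(* For integers $r,k\ge0$ and real $\alpha$ with $\alpha>k>r$, $$\sum_{n=1}^\infty\frac{H_{n+\alpha}^{(2)}}{(n+r)(n+k)}=\frac1{k-r}\Bigg\{(r-\alpha)\sum_{j=1}^r\frac{H_{\alpha+j-r}^{(2)}}{j(\alpha+j-r)}-(k-\alpha)\sum_{j=1}^k\frac{H_{\alpha+j-k}^{(2)}}{j(\alpha+j-k)}-\sum_{j=1}^{k-r}\frac{H_{\alpha+j-k}}{(\alpha+j-k)^2}$$ $$+2H_{\alpha-r}^{(3)}+H_{\alpha-k}\zeta(2)+2H_{\alpha-r}H_{\alpha-r}^{(2)}-2H_{\alpha-k}^{(3)}-H_{\alpha-r}\zeta(2)-2H_{\alpha-k}H_{\alpha-k}^{(2)}\Bigg\}.$$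
   Context: Shifted harmonic numbers: for a real $\alpha$ that is not a negative integer, $H_\alpha := \sum_{k=1}^\infty\left(\frac1k-\frac1{k+\alpha}\right)$ and, for integers $m\ge 2$, $H_\alpha^{(m)} := \sum_{k=1}^\infty\left(\frac1{k^m}-\frac1{(k+\alpha)^m}\right)=\zeta(m)-\zeta(m,\alpha+1)$, where $\zeta$ is the Riemann zeta function and $\zeta(s,\alpha+1)=\sum_{n=1}^\infty (n+\alpha)^{-s}$ is the Hurwitz zeta function. Empty sums are $0$. *)

theory Defs
  imports "HOL-Analysis.Analysis"
begin

text \<open>Shifted harmonic numbers, as in the paper (alpha not a negative integer):
  H_alpha = sum_{k>=1} (1/k - 1/(k+alpha)),
  H_alpha^(m) = sum_{k>=1} (1/k^m - 1/(k+alpha)^m).\<close>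

definition shifted_harm :: "real \<Rightarrow> real" where
  "shifted_harm a = (\<Sum>k. 1 / real (Suc k) - 1 / (real (Suc k) + a))"

definition shifted_harm_pow :: "nat \<Rightarrow> real \<Rightarrow> real" where
  "shifted_harm_pow m a = (\<Sum>k. 1 / real (Suc k) ^ m - 1 / (real (Suc k) + a) ^ m)"

definition zeta_real :: "nat \<Rightarrow> real" where
  "zeta_real m = (\<Sum>k. 1 / real (Suc k) ^ m)"

end

theory Submission
  imports Defs
begin

lemma zeta_summable: assumes "m \<ge> 2" shows "summable (\<lambda>k. 1 / real (Suc k) ^ m)"
proof -
  have "summable (\<lambda>n. inverse (real n ^ m))" using inverse_power_summable[OF assms] by simp
  then have "summable (\<lambda>n. inverse (real (Suc n) ^ m))" by (subst summable_Suc_iff)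
  then show ?thesis by (simp add: field_simps)
qed

lemma inv_shift_tendsto: assumes "m \<ge> 1" "c > 0"
  shows "(\<lambda>k. 1 / (real k + c) ^ m) \<longlonglongrightarrow> 0"
proof -
  have "filterlim (\<lambda>k. c + real k) at_top sequentially"
    by (rule filterlim_tendsto_add_at_top[OF tendsto_const filterlim_real_sequentially])
  hence "filterlim (\<lambda>k. real k + c) at_top sequentially" by (simp add: add.commute)
  hence "(\<lambda>k. inverse (real k + c)) \<longlonglongrightarrow> 0"
    by (intro tendsto_inverse_0_at_top)
  hence "(\<lambda>k. (inverse (real k + c)) ^ m) \<longlonglongrightarrow> 0 ^ m" by (intro tendsto_power)
  moreover have "(0::real) ^ m = 0" using assms by simp
  ultimately show ?thesis by (simp add: field_simps power_one_over)
qed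

lemma summable_hp: assumes "a \<ge> 0" "m \<ge> 1"
  shows "summable (\<lambda>k. 1 / real (Suc k) ^ m - 1 / (real (Suc k) + a) ^ m)"
proof (cases "m = 1")
  case True
  have "summable (\<lambda>k. a * (1 / real (Suc k) ^ 2))" using zeta_summable[of 2] by (intro summable_mult) auto
  moreover have "norm (1 / real (Suc k) ^ m - 1 / (real (Suc k) + a) ^ m) \<le> a * (1 / real (Suc k) ^ 2)" for k
  proof -
    have p: "real (Suc k) > 0" by simp
    have "1 / real (Suc k) - 1 / (real (Suc k) + a) = a / (real (Suc k) * (real (Suc k) + a))"
      using p assms by (simp add: field_simps)
    also have "\<dots> \<le> a / (real (Suc k) * real (Suc k))"
      using p assms by (intro divide_left_mono mult_left_mono) auto
    finally have "1 / real (Suc k) - 1 / (real (Suc k) + a) \<le> a * (1 / real (Suc k) ^ 2)"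
      by (simp add: power2_eq_square)
    moreover have "1 / real (Suc k) - 1 / (real (Suc k) + a) \<ge> 0"
      using p assms by (simp add: field_simps)
    ultimately show ?thesis using True by simp
  qed
  ultimately show ?thesis by (rule summable_comparison_test'[where N=0])
next
  case False
  hence m2: "m \<ge> 2" using assms by auto
  have "summable (\<lambda>k. 1 / (real (Suc k) + a) ^ m)"
  proof (rule summable_comparison_test'[where N=0, OF zeta_summable[OF m2]])
    fix k :: nat
    show "norm (1 / (real (Suc k) + a) ^ m) \<le> 1 / real (Suc k) ^ m"
      using assms by (simp add: frac_le power_mono)
  qed
  thus ?thesis using zeta_summable[OF m2] by (intro summable_diff)
qed

lemma hp_sums: assumes "a \<ge> 0" "m \<ge> 1"
  shows "(\<lambda>k. 1 / real (Suc k) ^ m - 1 / (real (Suc k) + a) ^ m) sums shifted_harm_pow m a"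
  unfolding shifted_harm_pow_def using summable_hp[OF assms] by (simp add: summable_sums)

lemma h_sums: assumes "a \<ge> 0"
  shows "(\<lambda>k. 1 / real (Suc k) - 1 / (real (Suc k) + a)) sums shifted_harm a"
  using hp_sums[OF assms, of 1] by (simp add: shifted_harm_def shifted_harm_pow_def)

lemma hp_rec: assumes "a \<ge> 0" "m \<ge> 1"
  shows "shifted_harm_pow m (a + 1) = shifted_harm_pow m a + 1 / (a + 1) ^ m"
proof -
  define g where "g k = 1 / (real k + (1 + a)) ^ m" for k
  have "g \<longlonglongrightarrow> 0" unfolding g_def using assms by (intro inv_shift_tendsto) auto
  hence t: "(\<lambda>k. g k - g (Suc k)) sums (g 0 - 0)" by (rule telescope_sums')
  have "(\<lambda>k. (1 / real (Suc k) ^ m - 1 / (real (Suc k) + a) ^ m) + (g k - g (Suc k)))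
        sums (shifted_harm_pow m a + (g 0 - 0))"
    by (intro sums_add hp_sums t assms)
  moreover have "(\<lambda>k. (1 / real (Suc k) ^ m - 1 / (real (Suc k) + a) ^ m) + (g k - g (Suc k)))
      = (\<lambda>k. 1 / real (Suc k) ^ m - 1 / (real (Suc k) + (a + 1)) ^ m)"
    by (rule ext) (simp add: g_def algebra_simps)
  ultimately have "(\<lambda>k. 1 / real (Suc k) ^ m - 1 / (real (Suc k) + (a + 1)) ^ m)
        sums (shifted_harm_pow m a + (g 0 - 0))" by simp
  moreover have "(\<lambda>k. 1 / real (Suc k) ^ m - 1 / (real (Suc k) + (a + 1)) ^ m) sums shifted_harm_pow m (a+1)"
    using assms by (intro hp_sums) auto
  ultimately show ?thesis by (simp add: sums_unique2 g_def add.commute)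
qed

lemma h_rec: assumes "a \<ge> 0"
  shows "shifted_harm (a + 1) = shifted_harm a + 1 / (a + 1)"
  using hp_rec[OF assms, of 1] by (simp add: shifted_harm_def shifted_harm_pow_def)

lemma h_zero: "shifted_harm 0 = 0" by (simp add: shifted_harm_def)

lemma zeta_sums: "(\<lambda>k. 1 / real (Suc k) ^ 2) sums zeta_real 2"
  unfolding zeta_real_def using zeta_summable[of 2] by (simp add: summable_sums)

lemma zdiff_sums: assumes "a \<ge> 0"
  shows "(\<lambda>k. 1 / (real (Suc k) + a) ^ 2) sums (zeta_real 2 - shifted_harm_pow 2 a)"
  using sums_diff[OF zeta_sums hp_sums[OF assms, of 2]] by simp

lemma hdiff_sums: assumes "a \<ge> 0" "b \<ge> 0"
  shows "(\<lambda>k. 1 / (real (Suc k) + b) - 1 / (real (Suc k) + a)) sums (shifted_harm a - shifted_harm b)"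
  using sums_diff[OF h_sums[OF assms(1)] h_sums[OF assms(2)]] by simp

lemma zdiff_bound: assumes "y > 0"
  shows "zeta_real 2 - shifted_harm_pow 2 y \<le> 1 / y" "0 \<le> zeta_real 2 - shifted_harm_pow 2 y"
proof -
  define g where "g k = 1 / (real k + y)" for k
  have "g \<longlonglongrightarrow> 0" unfolding g_def using inv_shift_tendsto[of 1 y] assms by simp
  hence t: "(\<lambda>k. g k - g (Suc k)) sums (g 0 - 0)" by (rule telescope_sums')
  have le: "1 / (real (Suc k) + y) ^ 2 \<le> g k - g (Suc k)" for k
  proof -
    have "g k - g (Suc k) = 1 / ((real k + y) * (real k + 1 + y))" unfolding g_def
      using assms by (simp add: field_simps)
    moreover have "(real k + y) * (real k + 1 + y) \<le> (real k + 1 + y) ^ 2"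
      using assms by (simp add: power2_eq_square mult_right_mono)
    moreover have "(real k + y) * (real k + 1 + y) > 0" using assms by simp
    ultimately have "1 / (real k + 1 + y) ^ 2 \<le> g k - g (Suc k)" by (simp add: frac_le)
    thus ?thesis by (simp add: ac_simps)
  qed
  show "zeta_real 2 - shifted_harm_pow 2 y \<le> 1 / y"
    using sums_le[OF le zdiff_sums t] assms by (simp add: g_def)
  show "0 \<le> zeta_real 2 - shifted_harm_pow 2 y"
    using sums_le[of "\<lambda>_. 0", OF _ sums_zero zdiff_sums] assms by simp
qed

definition Tser :: "real \<Rightarrow> nat \<Rightarrow> real" where
  "Tser a s = (\<Sum>n. (shifted_harm_pow 2 (real (Suc n) + a) - zeta_real 2) / (real (Suc n) + real s))"

lemma T_summable: assumes "a \<ge> 0"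
  shows "summable (\<lambda>n. (shifted_harm_pow 2 (real (Suc n) + a) - zeta_real 2) / (real (Suc n) + real s))"
proof (rule summable_comparison_test'[where N=0, OF zeta_summable[of 2]])
  fix n :: nat
  have p: "real (Suc n) + a > 0" using assms by simp
  note b = zdiff_bound[OF p]
  have "norm ((shifted_harm_pow 2 (real (Suc n) + a) - zeta_real 2) / (real (Suc n) + real s))
     = (zeta_real 2 - shifted_harm_pow 2 (real (Suc n) + a)) / (real (Suc n) + real s)"
    using b(2) by (simp add: abs_divide abs_of_nonpos)
  also have "\<dots> \<le> (1 / real (Suc n)) / real (Suc n)"
  proof (rule frac_le)
    show "zeta_real 2 - shifted_harm_pow 2 (real (Suc n) + a) \<le> 1 / real (Suc n)"
      using b(1) assms order_trans frac_le[of 1 1 "real (Suc n)" "real (Suc n) + a"] by fastforce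
  qed (use b(2) in auto)
  also have "\<dots> = 1 / real (Suc n) ^ 2" by (simp add: power2_eq_square)
  finally show "norm ((shifted_harm_pow 2 (real (Suc n) + a) - zeta_real 2) / (real (Suc n) + real s))
     \<le> 1 / real (Suc n) ^ 2" .
qed simp

lemma T_sums: "a \<ge> 0 \<Longrightarrow> (\<lambda>n. (shifted_harm_pow 2 (real (Suc n) + a) - zeta_real 2) / (real (Suc n) + real s)) sums Tser a s"
  unfolding Tser_def by (rule summable_sums[OF T_summable])

lemma T_diff1: assumes "a \<ge> 0"
  shows "(\<lambda>n. 1 / ((real (Suc n) + (a + 1))^2 * (real (Suc n) + real s))) sums (Tser (a+1) s - Tser a s)"
proof -
  have "(\<lambda>n. (shifted_harm_pow 2 (real (Suc n) + (a+1)) - zeta_real 2) / (real (Suc n) + real s)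
     - (shifted_harm_pow 2 (real (Suc n) + a) - zeta_real 2) / (real (Suc n) + real s)) sums (Tser (a+1) s - Tser a s)"
    using assms by (intro sums_diff T_sums) auto
  moreover have "(shifted_harm_pow 2 (real (Suc n) + (a+1)) - zeta_real 2) / (real (Suc n) + real s)
     - (shifted_harm_pow 2 (real (Suc n) + a) - zeta_real 2) / (real (Suc n) + real s)
     = 1 / ((real (Suc n) + (a + 1))^2 * (real (Suc n) + real s))" for n
  proof -
    have "shifted_harm_pow 2 (real (Suc n) + a + 1) = shifted_harm_pow 2 (real (Suc n) + a) + 1 / (real (Suc n) + a + 1)^2"
      using assms by (intro hp_rec) auto
    hence "shifted_harm_pow 2 (real (Suc n) + (a + 1)) = shifted_harm_pow 2 (real (Suc n) + a) + 1 / (real (Suc n) + (a + 1))^2"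
      by (simp add: add.assoc)
    hence "(shifted_harm_pow 2 (real (Suc n) + (a+1)) - zeta_real 2) - (shifted_harm_pow 2 (real (Suc n) + a) - zeta_real 2)
       = 1 / (real (Suc n) + (a + 1))^2" by simp
    thus ?thesis by (simp add: diff_divide_distrib[symmetric])
  qed
  ultimately show ?thesis by simp
qed

lemma T_diff2: assumes "a \<ge> 0"
  shows "Tser (a+1) (Suc s) = Tser a s - (shifted_harm_pow 2 (1 + a) - zeta_real 2) / (1 + real s)"
proof -
  have "Tser (a+1) (Suc s) = (\<Sum>n. (\<lambda>n. (shifted_harm_pow 2 (real (Suc n) + a) - zeta_real 2) / (real (Suc n) + real s)) (Suc n))"
    unfolding Tser_def by (rule suminf_cong) (simp add: algebra_simps)
  also have "\<dots> = Tser a s - (shifted_harm_pow 2 (1 + a) - zeta_real 2) / (1 + real s)"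
    unfolding Tser_def by (subst suminf_split_head[OF T_summable[OF assms]]) simp
  finally show ?thesis .
qed

lemma pf: fixes x c :: real assumes "x > 0" "c > 0"
  shows "(1 / c^2) * (1 / x - 1 / (x + c)) - (1/c) * (1 / (x + c) ^ 2) = 1 / ((x + c)^2 * x)"
proof -
  have n: "x + c \<noteq> 0" "x \<noteq> 0" "c \<noteq> 0" using assms by auto
  have "1 / x - 1 / (x + c) = c / (x * (x + c))" using n by (simp add: field_simps)
  hence "(1 / c^2) * (1 / x - 1 / (x + c)) = 1 / (c * (x * (x + c)))" using n by (simp add: power2_eq_square)
  moreover have "1 / (c * (x * (x + c))) - (1/c) * (1 / (x + c) ^ 2) = ((x + c) - x) / (c * x * (x + c)^2)"
  proof -
    have a1: "1 / (c * (x * (x + c))) = (x + c) / (c * x * (x + c)^2)" using n by (simp add: power2_eq_square)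
    have a2: "(1/c) * (1 / (x + c) ^ 2) = x / (c * x * (x + c)^2)" using n by (simp add: power2_eq_square)
    show ?thesis unfolding a1 a2 by (rule diff_divide_distrib[symmetric])
  qed
  moreover have "((x + c) - x) / (c * x * (x + c)^2) = 1 / ((x + c)^2 * x)" using n by simp
  ultimately show ?thesis by simp
qed

lemma R_sums: assumes "real s < al"
  shows "(\<lambda>n. 1 / ((real (Suc n) + al)^2 * (real (Suc n) + real s))) sums
     ((shifted_harm al - shifted_harm (real s)) / (al - real s)^2 - (zeta_real 2 - shifted_harm_pow 2 al) / (al - real s))"
proof -
  define c where "c = al - real s"
  have c: "c > 0" using assms by (simp add: c_def)
  have al: "al \<ge> 0" using assms by (smt (verit) of_nat_0_le_iff)
  have "(\<lambda>n. (1 / c^2) * (1 / (real (Suc n) + real s) - 1 / (real (Suc n) + al)) - (1/c) * (1 / (real (Suc n) + al) ^ 2))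
     sums ((1 / c^2) * (shifted_harm al - shifted_harm (real s)) - (1/c) * (zeta_real 2 - shifted_harm_pow 2 al))"
    using al by (intro sums_diff sums_mult hdiff_sums zdiff_sums) auto
  moreover have "(1 / c^2) * (1 / (real (Suc n) + real s) - 1 / (real (Suc n) + al)) - (1/c) * (1 / (real (Suc n) + al) ^ 2)
     = 1 / ((real (Suc n) + al)^2 * (real (Suc n) + real s))" for n
  proof -
    have p1: "real (Suc n) + al > 0" "real (Suc n) + real s > 0" using al by auto
    have e: "real (Suc n) + al = (real (Suc n) + real s) + c" by (simp add: c_def)
    show ?thesis unfolding e using pf[OF p1(2) c] .
  qed
  ultimately show ?thesis by (simp add: c_def)
qed

lemma L2: assumes "y > 0"
  shows "(\<Sum>j=1..s. 1 / (real j * (y + real j)^2)) =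
    (shifted_harm (real s) - shifted_harm (y + real s) + shifted_harm y) / y^2
    - (shifted_harm_pow 2 (y + real s) - shifted_harm_pow 2 y) / y"
proof (induction s)
  case 0
  then show ?case by (simp add: h_zero)
next
  case (Suc s)
  have r1: "shifted_harm (real s + 1) = shifted_harm (real s) + 1 / (real s + 1)" by (rule h_rec) simp
  have r2: "shifted_harm (y + real s + 1) = shifted_harm (y + real s) + 1 / (y + real s + 1)"
    using assms by (intro h_rec) simp
  have r3: "shifted_harm_pow 2 (y + real s + 1) = shifted_harm_pow 2 (y + real s) + 1 / (y + real s + 1)^2"
    using assms by (intro hp_rec) simp_all
  have B: "real (Suc s) = real s + 1" "y + (real s + 1) = y + real s + 1" "real s + 1 + y = y + real s + 1" by simp_all
  have p: "1 / (real (Suc s) * (y + real (Suc s))^2) = 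
     (1 / y^2) * (1 / (real s + 1) - 1 / (y + real s + 1)) - (1/y) * (1 / (y + real s + 1) ^ 2)"
    using pf[of "real s + 1" y] assms by (simp add: ac_simps)
  have lin: "\<And>P Q R S T u v w :: real. (P - Q + R)/y^2 - (S - T)/y + ((1/y^2)*(u - v) - (1/y)*w)
     = ((P+u) - (Q+v) + R)/y^2 - ((S + w) - T)/y"
    by (simp add: diff_divide_distrib add_divide_distrib)
  have A: "(\<Sum>j=1..Suc s. 1 / (real j * (y + real j)^2)) = (\<Sum>j=1..s. 1 / (real j * (y + real j)^2))
      + 1 / (real (Suc s) * (y + real (Suc s))^2)" by simp
  also have "\<dots> = ((shifted_harm (real s) + 1 / (real s + 1)) - (shifted_harm (y + real s) + 1 / (y + real s + 1)) + shifted_harm y) / y^2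
     - ((shifted_harm_pow 2 (y + real s) + 1 / (y + real s + 1) ^ 2) - shifted_harm_pow 2 y) / y"
    unfolding Suc.IH p by (rule lin)
  also have "\<dots> = (shifted_harm (real (Suc s)) - shifted_harm (y + real (Suc s)) + shifted_harm y) / y^2
    - (shifted_harm_pow 2 (y + real (Suc s)) - shifted_harm_pow 2 y) / y"
    by (simp only: B r1 r2 r3)
  finally show ?case .
qed

definition Ap :: "real \<Rightarrow> nat \<Rightarrow> real" where
  "Ap al s = (real s - al) * (\<Sum>j=1..s. shifted_harm_pow 2 (al + real j - real s) / (real j * (al + real j - real s)))
     + 2 * shifted_harm_pow 3 (al - real s) + 2 * shifted_harm (al - real s) * shifted_harm_pow 2 (al - real s)
     - shifted_harm (al - real s) * zeta_real 2
     + (\<Sum>j=1..s. shifted_harm (al + real j - real s) / (al + real j - real s)^2)"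

lemma split_sum: fixes z :: real assumes "z > 0"
  shows "(-z) * (\<Sum>j=1..n. f j / (real j * (z + real j))) = - (\<Sum>j=1..n. f j / real j) + (\<Sum>j=1..n. f j / (z + real j))"
proof -
  have "(-z) * (\<Sum>j=1..n. f j / (real j * (z + real j))) = (\<Sum>j=1..n. - (f j / real j) + f j / (z + real j))"
    unfolding sum_distrib_left
  proof (rule sum.cong)
    fix j assume "j \<in> {1..n}"
    hence j: "real j > 0" by simp
    have "1 / real j - 1 / (z + real j) = z / (real j * (z + real j))" using j assms by (simp add: field_simps)
    hence "f j * (1 / real j - 1 / (z + real j)) = f j * (z / (real j * (z + real j)))" by simp
    thus "- z * (f j / (real j * (z + real j))) = - (f j / real j) + f j / (z + real j)"
      by (simp add: algebra_simps)
  qed simp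
  thus ?thesis by (simp add: sum_subtractf)
qed

lemma sum_head: "(\<Sum>j=1..Suc s. g j) = g 1 + (\<Sum>j=1..s. g (Suc j))"
  by (induction s) (simp_all add: add.assoc)

lemma Ap_alt: assumes "z = al - real s"
  shows "Ap al s = (-z) * (\<Sum>j=1..s. shifted_harm_pow 2 (z + real j) / (real j * (z + real j)))
     + 2 * shifted_harm_pow 3 z + 2 * shifted_harm z * shifted_harm_pow 2 z - shifted_harm z * zeta_real 2
     + (\<Sum>j=1..s. shifted_harm (z + real j) / (z + real j)^2)"
proof -
  have a: "al + real j - real s = z + real j" for j using assms by simp
  have b: "real s - al = -z" "al - real s = z" using assms by simp_all
  show ?thesis unfolding Ap_def a b ..
qed

lemma local_id: assumes "y > 1"
  shows "Ap (y + real s) s - Ap (y + real s) (Suc s) =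
    shifted_harm_pow 2 (y + real s) / (real s + 1) + (shifted_harm (y + real s) - shifted_harm (real s)) / y^2
    + (shifted_harm_pow 2 (y + real s) - zeta_real 2) / y"
proof -
  define x where "x = y - 1"
  have x: "x > 0" "y = x + 1" using assms by (simp_all add: x_def)
  have y0: "y > 0" using assms by simp
  have e1: "Ap (y + real s) s = (-y) * (\<Sum>j=1..s. shifted_harm_pow 2 (y + real j) / (real j * (y + real j)))
     + 2 * shifted_harm_pow 3 y + 2 * shifted_harm y * shifted_harm_pow 2 y - shifted_harm y * zeta_real 2
     + (\<Sum>j=1..s. shifted_harm (y + real j) / (y + real j)^2)" by (rule Ap_alt) simp
  have e2: "Ap (y + real s) (Suc s) = (-x) * (\<Sum>j=1..Suc s. shifted_harm_pow 2 (x + real j) / (real j * (x + real j)))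
     + 2 * shifted_harm_pow 3 x + 2 * shifted_harm x * shifted_harm_pow 2 x - shifted_harm x * zeta_real 2
     + (\<Sum>j=1..Suc s. shifted_harm (x + real j) / (x + real j)^2)" by (rule Ap_alt) (simp add: x_def)
  have sA: "(-y) * (\<Sum>j=1..s. shifted_harm_pow 2 (y + real j) / (real j * (y + real j)))
     = - (\<Sum>j=1..s. shifted_harm_pow 2 (y + real j) / real j) + (\<Sum>j=1..s. shifted_harm_pow 2 (y + real j) / (y + real j))"
    by (rule split_sum[OF y0])
  have sB: "(-x) * (\<Sum>j=1..Suc s. shifted_harm_pow 2 (x + real j) / (real j * (x + real j)))
     = - (\<Sum>j=1..Suc s. shifted_harm_pow 2 (x + real j) / real j) + (\<Sum>j=1..Suc s. shifted_harm_pow 2 (x + real j) / (x + real j))"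
    by (rule split_sum[OF x(1)])
  have xs: "x + real (Suc j) = y + real j" for j by (simp add: x)
  have c1: "(\<Sum>j=1..Suc s. shifted_harm (x + real j) / (x + real j)^2) = shifted_harm y / y^2 + (\<Sum>j=1..s. shifted_harm (y + real j) / (y + real j)^2)"
    unfolding sum_head xs by (simp add: x)
  have c2: "(\<Sum>j=1..Suc s. shifted_harm_pow 2 (x + real j) / (x + real j)) = shifted_harm_pow 2 y / y + (\<Sum>j=1..s. shifted_harm_pow 2 (y + real j) / (y + real j))"
    unfolding sum_head xs by (simp add: x)
  have c3: "(\<Sum>j=1..Suc s. shifted_harm_pow 2 (x + real j) / real j) = (\<Sum>j=1..s. shifted_harm_pow 2 (x + real j) / real j) + shifted_harm_pow 2 (y + real s) / (real s + 1)"
    by (simp add: x add_ac)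
  have c4: "(\<Sum>j=1..s. shifted_harm_pow 2 (x + real j) / real j) = (\<Sum>j=1..s. shifted_harm_pow 2 (y + real j) / real j) - (\<Sum>j=1..s. 1 / (real j * (y + real j)^2))"
    unfolding sum_subtractf[symmetric]
  proof (rule sum.cong)
    fix j assume "j \<in> {1..s}"
    have "shifted_harm_pow 2 (x + real j + 1) = shifted_harm_pow 2 (x + real j) + 1 / (x + real j + 1)^2"
      using x by (intro hp_rec) auto
    moreover have "x + real j + 1 = y + real j" by (simp add: x)
    ultimately show "shifted_harm_pow 2 (x + real j) / real j = shifted_harm_pow 2 (y + real j) / real j - 1 / (real j * (y + real j)^2)"
      by (simp add: add_divide_distrib mult.commute)
  qed simp
  note l2 = L2[OF y0, of s]
  have rH: "shifted_harm y = shifted_harm x + 1 / y" using h_rec[of x] x by simp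
  have rH2: "shifted_harm_pow 2 y = shifted_harm_pow 2 x + 1 / y^2" using hp_rec[of x 2] x by simp
  have rH3: "shifted_harm_pow 3 y = shifted_harm_pow 3 x + 1 / y^3" using hp_rec[of x 3] x by simp
  have hx: "shifted_harm x = shifted_harm y - 1 / y" "shifted_harm_pow 2 x = shifted_harm_pow 2 y - 1 / y^2"
     "shifted_harm_pow 3 x = shifted_harm_pow 3 y - 1 / y^3" using rH rH2 rH3 by simp_all
  have prod: "2 * shifted_harm y * shifted_harm_pow 2 y - 2 * shifted_harm x * shifted_harm_pow 2 x
     = 2 * (shifted_harm y / y^2) + 2 * (shifted_harm_pow 2 y / y) - 2 / y^3"
    unfolding hx using y0 by (simp add: field_simps power2_eq_square power3_eq_cube)
  have prod': "2 * shifted_harm x * shifted_harm_pow 2 x = 2 * shifted_harm y * shifted_harm_pow 2 y - (2 * (shifted_harm y / y^2) + 2 * (shifted_harm_pow 2 y / y) - 2 / y^3)"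
    using prod by simp
  show ?thesis unfolding e1 e2 sA sB c1 c2 c3 c4 l2 prod' unfolding hx(1) hx(3)
    by (simp add: diff_divide_distrib add_divide_distrib algebra_simps)
qed

lemma step: assumes "real (Suc s) < al"
  shows "Tser al s - zeta_real 2 * shifted_harm (real s) - Ap al s
       = Tser al (Suc s) - zeta_real 2 * shifted_harm (real (Suc s)) - Ap al (Suc s)"
proof -
  define a where "a = al - 1"
  have a: "a \<ge> 0" "al = a + 1" using assms by (simp_all add: a_def)
  have "(\<lambda>n. 1 / ((real (Suc n) + al)^2 * (real (Suc n) + real s))) sums (Tser al s - Tser a s)"
    using T_diff1[OF a(1), of s] by (simp add: a(2))
  moreover have "(\<lambda>n. 1 / ((real (Suc n) + al)^2 * (real (Suc n) + real s))) sums
     ((shifted_harm al - shifted_harm (real s)) / (al - real s)^2 - (zeta_real 2 - shifted_harm_pow 2 al) / (al - real s))"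
    using assms by (intro R_sums) simp
  ultimately have t1: "Tser al s - Tser a s = (shifted_harm al - shifted_harm (real s)) / (al - real s)^2 - (zeta_real 2 - shifted_harm_pow 2 al) / (al - real s)"
    by (rule sums_unique2)
  have t2: "Tser al (Suc s) = Tser a s - (shifted_harm_pow 2 al - zeta_real 2) / (real s + 1)"
    using T_diff2[OF a(1), of s] by (simp add: a(2) add.commute)
  have hr: "shifted_harm (real (Suc s)) = shifted_harm (real s) + 1 / (real s + 1)"
    using h_rec[of "real s"] by (simp add: add.commute)
  define y where "y = al - real s"
  have y: "y > 1" "al = y + real s" using assms by (simp_all add: y_def)
  have li: "Ap al s - Ap al (Suc s) = shifted_harm_pow 2 al / (real s + 1) + (shifted_harm al - shifted_harm (real s)) / y^2
    + (shifted_harm_pow 2 al - zeta_real 2) / y"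
    using local_id[OF y(1), of s] by (simp add: y(2))
  have t1': "Tser al s - Tser a s = (shifted_harm al - shifted_harm (real s)) / y^2 - (zeta_real 2 - shifted_harm_pow 2 al) / y"
    using t1 by (simp add: y_def)
  show ?thesis using li t1' unfolding t2 hr
    by (simp add: diff_divide_distrib add_divide_distrib algebra_simps)
qed

lemma telescope: assumes "r \<le> k" "real k < al"
  shows "Tser al r - zeta_real 2 * shifted_harm (real r) - Ap al r = Tser al k - zeta_real 2 * shifted_harm (real k) - Ap al k"
  using assms
proof (induction k)
  case 0 thus ?case by simp
next
  case (Suc k)
  show ?case
  proof (cases "r = Suc k")
    case False
    hence "r \<le> k" using Suc by simp
    with Suc show ?thesis using step[of k al] by simp
  qed simp
qed

lemma sum_split_add: fixes d r :: nat and f :: "nat \<Rightarrow> 'a::comm_monoid_add" shows "(\<Sum>j=1..d+r. f j) = (\<Sum>j=1..d. f j) + (\<Sum>j=1..r. f (d + j))"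
  by (induction r) (simp_all add: add.assoc)

theorem theorem2p4:
  fixes r k :: nat and \<alpha> :: real
  assumes "r < k" and "real k < \<alpha>"
  shows "(\<lambda>i. shifted_harm_pow 2 (real (Suc i) + \<alpha>) /
              ((real (Suc i) + real r) * (real (Suc i) + real k)))
         sums
         (1 / (real k - real r) *
           ((real r - \<alpha>) * (\<Sum>j=1..r. shifted_harm_pow 2 (\<alpha> + real j - real r) /
                                   (real j * (\<alpha> + real j - real r)))
            - (real k - \<alpha>) * (\<Sum>j=1..k. shifted_harm_pow 2 (\<alpha> + real j - real k) /
                                   (real j * (\<alpha> + real j - real k)))
            - (\<Sum>j=1..k-r. shifted_harm (\<alpha> + real j - real k) / (\<alpha> + real j - real k)^2)
            + 2 * shifted_harm_pow 3 (\<alpha> - real r)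
            + shifted_harm (\<alpha> - real k) * zeta_real 2
            + 2 * shifted_harm (\<alpha> - real r) * shifted_harm_pow 2 (\<alpha> - real r)
            - 2 * shifted_harm_pow 3 (\<alpha> - real k)
            - shifted_harm (\<alpha> - real r) * zeta_real 2
            - 2 * shifted_harm (\<alpha> - real k) * shifted_harm_pow 2 (\<alpha> - real k)))"
proof -
  define d where "d = real k - real r"
  define Z where "Z = zeta_real 2"
  have d: "d > 0" using assms(1) by (simp add: d_def)
  have al: "\<alpha> \<ge> 0" using assms by linarith
  have S: "(\<lambda>i. (1/d) * (Z * (1 / (real (Suc i) + real r) - 1 / (real (Suc i) + real k))
     + ((shifted_harm_pow 2 (real (Suc i) + \<alpha>) - Z) / (real (Suc i) + real r)
      - (shifted_harm_pow 2 (real (Suc i) + \<alpha>) - Z) / (real (Suc i) + real k))))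
     sums ((1/d) * (Z * (shifted_harm (real k) - shifted_harm (real r)) + (Tser \<alpha> r - Tser \<alpha> k)))"
    unfolding Z_def by (intro sums_mult sums_add sums_diff hdiff_sums T_sums al) auto
  have eq: "(1/d) * (Z * (1 / (real (Suc i) + real r) - 1 / (real (Suc i) + real k))
     + ((shifted_harm_pow 2 (real (Suc i) + \<alpha>) - Z) / (real (Suc i) + real r)
      - (shifted_harm_pow 2 (real (Suc i) + \<alpha>) - Z) / (real (Suc i) + real k)))
     = shifted_harm_pow 2 (real (Suc i) + \<alpha>) / ((real (Suc i) + real r) * (real (Suc i) + real k))" for i
  proof -
    have n: "real (Suc i) + real r > 0" "real (Suc i) + real k > 0" by simp_all
    have X: "Z * (1 / (real (Suc i) + real r) - 1 / (real (Suc i) + real k))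
     + ((shifted_harm_pow 2 (real (Suc i) + \<alpha>) - Z) / (real (Suc i) + real r)
      - (shifted_harm_pow 2 (real (Suc i) + \<alpha>) - Z) / (real (Suc i) + real k))
      = shifted_harm_pow 2 (real (Suc i) + \<alpha>) * (1 / (real (Suc i) + real r) - 1 / (real (Suc i) + real k))"
      by (simp add: diff_divide_distrib algebra_simps)
    have D: "1 / (real (Suc i) + real r) - 1 / (real (Suc i) + real k) = d / ((real (Suc i) + real r) * (real (Suc i) + real k))"
      using n unfolding d_def by (simp add: field_simps)
    show ?thesis using X unfolding D using d by simp
  qed
  have tel: "Tser \<alpha> r - Z * shifted_harm (real r) - Ap \<alpha> r = Tser \<alpha> k - Z * shifted_harm (real k) - Ap \<alpha> k"
    unfolding Z_def using telescope[of r k \<alpha>] assms by simp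
  have C: "(\<Sum>j=1..k. shifted_harm (\<alpha> + real j - real k) / (\<alpha> + real j - real k)^2)
    = (\<Sum>j=1..k-r. shifted_harm (\<alpha> + real j - real k) / (\<alpha> + real j - real k)^2)
     + (\<Sum>j=1..r. shifted_harm (\<alpha> + real j - real r) / (\<alpha> + real j - real r)^2)"
  proof -
    have k: "k = (k - r) + r" using assms(1) by simp
    have "(\<Sum>j=1..k. shifted_harm (\<alpha> + real j - real k) / (\<alpha> + real j - real k)^2)
       = (\<Sum>j=1..(k-r)+r. shifted_harm (\<alpha> + real j - real k) / (\<alpha> + real j - real k)^2)"
      using k by simp
    also have "\<dots> = (\<Sum>j=1..k-r. shifted_harm (\<alpha> + real j - real k) / (\<alpha> + real j - real k)^2)
     + (\<Sum>j=1..r. shifted_harm (\<alpha> + real (k - r + j) - real k) / (\<alpha> + real (k - r + j) - real k)^2)"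
      by (rule sum_split_add)
    also have "(\<lambda>j. \<alpha> + real (k - r + j) - real k) = (\<lambda>j. \<alpha> + real j - real r)"
      using assms(1) by (auto simp: of_nat_diff)
    finally show ?thesis by simp
  qed
  have val: "(1/d) * (Z * (shifted_harm (real k) - shifted_harm (real r)) + (Tser \<alpha> r - Tser \<alpha> k))
     = 1 / (real k - real r) * (Ap \<alpha> r - Ap \<alpha> k)"
  proof -
    have "Z * (shifted_harm (real k) - shifted_harm (real r)) + (Tser \<alpha> r - Tser \<alpha> k) = Ap \<alpha> r - Ap \<alpha> k"
      using tel by (simp add: algebra_simps)
    thus ?thesis unfolding d_def by simp
  qed
  show ?thesis
    using S unfolding eq val unfolding Ap_def C Z_def
    by (simp add: algebra_simps)
qed

end
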